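(* Let $\mathcal G$ be a network with out-degree vector $w$, $h\in\mathbb R^{\mathcal V}$, and assume $\mathcal G$ is $h$-indecomposable. Consider the coordination game on $\mathcal G$ with external field $h$. Then: (i) if $|h|\le w$, then $\mathcal X^*_h=\{\pm\mathbf 1\}$ and it is globally I-stable; (ii) if $|h|<w$, then $\mathcal X^*_h=\{\pm\mathbf 1\}$ and it is globally BR-stable; (iii) if $w\ngeq a h$ for some $a\in\{\pm1\}$, then $\mathcal X^*_h=\{a\mathbf 1\}$ and it is globally BR-stable.
   Context: A network is $\mathcal G=(\mathcal V,\mathcal E,W)$ with finite node set $\mathcal V$, links $\mathcal E\subseteq\mathcal V\times\mathcal V$, weight matrix $W\in\mathbb R_+^{\mathcal V\times\mathcal V}$ with zero diagonal, $W_{ij}>0$ iff $(i,j)\in\mathcal E$; for $\mathcal S\subseteq\mathcal V$, $w_i^{\mathcal S}=\sum_{j\in\mathcal S}W_{ij}$; $w=W\mathbf 1$. $\mathcal X=\{-1,+1\}^{\mathcal V}$. Componentwise order: $x\le y$ iff $x_i\le y_i$ for all $i$, $x<y$ iff $x_i<y_i$ for all $i$, $x\ngeq y$ iff $x_i<y_i$ for some $i$; $|h|$ is the entrywise absolute value. $h$-indecomposable: for every partition $\mathcal V=\mathcal V^+\cup\mathcal V^-$ into two disjoint nonempty sets there exist $s\in\{-,+\}$ and $i\in\mathcal V^s$ with $w_i^{\mathcal V^s}+s\,h_i<w_i^{\mathcal V^{-s}}$ ($s\,h_i$ is $\pm h_i$ according to $s$, $-s$ is the opposite sign). Coordination game with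 external field $h$: players $\mathcal V$, actions $\{\pm1\}$, utilities $u_i(x)=x_i(\sum_jW_{ij}x_j+h_i)$; equilibria $x^*$ with $x^*_i$ maximizing $u_i(\cdot,x^*_{-i})$, set $\mathcal X^*_h$. An admissible path is a sequence $x^{(0)},\dots,x^{(l)}$ ($l\ge0$) with consecutive configurations differing exactly in the action of one player $i_k$; it is an I-path if $u_{i_k}(x^{(k)})>u_{i_k}(x^{(k-1)})$ for all $k$, a BR-path if $u_{i_k}(x^{(k)})\ge u_{i_k}(x^{(k-1)})$ for all $k$. For $\alpha\in\{\mathrm I,\mathrm{BR}\}$, $\mathcal Y\subseteq\mathcal X$ is globally $\alpha$-stable if from every $x\in\mathcal X$ there is an $\alpha$-path to some element of $\mathcal Y$, and there is no $\alpha$-path from any $y\in\mathcal Y$ to any $z\notin\mathcal Y$. *)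

theory Defs
  imports Complex_Main
begin

(* Node set = the finite type 'v (V = UNIV). W i j is the weight of link (i,j);
   the link set E = {(i,j). W i j > 0} is implicit. *)
definition network :: "('v::finite \<Rightarrow> 'v \<Rightarrow> real) \<Rightarrow> bool" where
  "network W \<longleftrightarrow> (\<forall>i j. 0 \<le> W i j) \<and> (\<forall>i. W i i = 0)"

definition wS :: "('v::finite \<Rightarrow> 'v \<Rightarrow> real) \<Rightarrow> 'v set \<Rightarrow> 'v \<Rightarrow> real" where
  "wS W S i = (\<Sum>j\<in>S. W i j)"

definition outdeg :: "('v::finite \<Rightarrow> 'v \<Rightarrow> real) \<Rightarrow> 'v \<Rightarrow> real" where
  "outdeg W i = (\<Sum>j\<in>UNIV. W i j)"

(* h-indecomposability; V^+ = P, V^- = -P *)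
definition h_indecomposable ::
  "('v::finite \<Rightarrow> 'v \<Rightarrow> real) \<Rightarrow> ('v \<Rightarrow> real) \<Rightarrow> bool" where
  "h_indecomposable W h \<longleftrightarrow>
     (\<forall>P. P \<noteq> {} \<and> - P \<noteq> {} \<longrightarrow>
        (\<exists>i\<in>P. wS W P i + h i < wS W (- P) i) \<or>
        (\<exists>i\<in>- P. wS W (- P) i - h i < wS W P i))"

definition configs :: "('v \<Rightarrow> real) set" where
  "configs = {x. \<forall>i. x i = 1 \<or> x i = -1}"

definition utility ::
  "('v::finite \<Rightarrow> 'v \<Rightarrow> real) \<Rightarrow> ('v \<Rightarrow> real) \<Rightarrow> 'v \<Rightarrow> ('v \<Rightarrow> real) \<Rightarrow> real" where
  "utility W h i x = x i * ((\<Sum>j\<in>UNIV. W i j * x j) + h i)"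

definition equilibria ::
  "('v::finite \<Rightarrow> 'v \<Rightarrow> real) \<Rightarrow> ('v \<Rightarrow> real) \<Rightarrow> ('v \<Rightarrow> real) set" where
  "equilibria W h = {x \<in> configs. \<forall>i. \<forall>a\<in>{-1, 1}.
       utility W h i (x(i := a)) \<le> utility W h i x}"

datatype dynamics = Imp | BR

definition adm_step :: "('v \<Rightarrow> real) \<Rightarrow> ('v \<Rightarrow> real) \<Rightarrow> 'v \<Rightarrow> bool" where
  "adm_step x y i \<longleftrightarrow> x \<in> configs \<and> y \<in> configs \<and> y i \<noteq> x i \<and> (\<forall>j. j \<noteq> i \<longrightarrow> y j = x j)"

definition improves ::
  "dynamics \<Rightarrow> ('v::finite \<Rightarrow> 'v \<Rightarrow> real) \<Rightarrow> ('v \<Rightarrow> real) \<Rightarrow> 'v \<Rightarrow> ('v \<Rightarrow> real) \<Rightarrow> ('v \<Rightarrow> real) \<Rightarrow> bool" where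
  "improves \<alpha> W h i x y =
     (case \<alpha> of Imp \<Rightarrow> utility W h i y > utility W h i x
              | BR \<Rightarrow> utility W h i y \<ge> utility W h i x)"

definition alpha_path ::
  "dynamics \<Rightarrow> ('v::finite \<Rightarrow> 'v \<Rightarrow> real) \<Rightarrow> ('v \<Rightarrow> real) \<Rightarrow> ('v \<Rightarrow> real) list \<Rightarrow> bool" where
  "alpha_path \<alpha> W h p \<longleftrightarrow> p \<noteq> [] \<and> set p \<subseteq> configs \<and>
     (\<forall>k. Suc k < length p \<longrightarrow>
        (\<exists>i. adm_step (p ! k) (p ! Suc k) i \<and> improves \<alpha> W h i (p ! k) (p ! Suc k)))"

definition reaches ::
  "dynamics \<Rightarrow> ('v::finite \<Rightarrow> 'v \<Rightarrow> real) \<Rightarrow> ('v \<Rightarrow> real) \<Rightarrow> ('v \<Rightarrow> real) \<Rightarrow> ('v \<Rightarrow> real) \<Rightarrow> bool" where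
  "reaches \<alpha> W h x y \<longleftrightarrow> (\<exists>p. alpha_path \<alpha> W h p \<and> hd p = x \<and> last p = y)"

definition globally_stable ::
  "dynamics \<Rightarrow> ('v::finite \<Rightarrow> 'v \<Rightarrow> real) \<Rightarrow> ('v \<Rightarrow> real) \<Rightarrow> ('v \<Rightarrow> real) set \<Rightarrow> bool" where
  "globally_stable \<alpha> W h Y \<longleftrightarrow>
     (\<forall>x\<in>configs. \<exists>y\<in>Y. reaches \<alpha> W h x y) \<and>
     (\<forall>y\<in>Y. \<forall>z. z \<notin> Y \<longrightarrow> \<not> reaches \<alpha> W h y z)"

end

theory Submission
  imports Defs
begin

definition F :: "('v::finite \<Rightarrow> 'v \<Rightarrow> real) \<Rightarrow> ('v \<Rightarrow> real) \<Rightarrow> ('v \<Rightarrow> real) \<Rightarrow> 'v \<Rightarrow> real" where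
  "F W h x i = (\<Sum>j\<in>UNIV. W i j * x j) + h i"

lemma F_local:
  assumes "network W" "\<forall>j. j \<noteq> i \<longrightarrow> y j = x j"
  shows "F W h y i = F W h x i"
proof -
  have "W i j * y j = W i j * x j" for j
    using assms by (cases "j = i") (auto simp: network_def)
  then have "(\<Sum>j\<in>UNIV. W i j * y j) = (\<Sum>j\<in>UNIV. W i j * x j)"
    by (intro sum.cong) auto
  then show ?thesis by (simp add: F_def)
qed

lemma utility_F: "utility W h i x = x i * F W h x i"
  by (simp add: utility_def F_def)

lemma F_mono:
  assumes "network W" "\<forall>j. y j \<le> x j"
  shows "F W h y i \<le> F W h x i"
proof -
  have "(\<Sum>j\<in>UNIV. W i j * y j) \<le> (\<Sum>j\<in>UNIV. W i j * x j)"
    by (rule sum_mono) (use assms in \<open>auto simp: network_def intro: mult_left_mono\<close>)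
  then show ?thesis by (simp add: F_def)
qed

lemma F_bounds:
  assumes "network W" "x \<in> configs"
  shows "- outdeg W i + h i \<le> F W h x i" "F W h x i \<le> outdeg W i + h i"
proof -
  have "W i j * x j \<le> W i j" "- W i j \<le> W i j * x j" for j
  proof -
    have "0 \<le> W i j" using assms(1) by (simp add: network_def)
    moreover have "x j = 1 \<or> x j = -1" using assms(2) by (simp add: configs_def)
    ultimately show "W i j * x j \<le> W i j" "- W i j \<le> W i j * x j" by auto
  qed
  then have "(\<Sum>j\<in>UNIV. W i j * x j) \<le> (\<Sum>j\<in>UNIV. W i j)"
     "(\<Sum>j\<in>UNIV. - W i j) \<le> (\<Sum>j\<in>UNIV. W i j * x j)"
    by (auto intro: sum_mono)
  then show "- outdeg W i + h i \<le> F W h x i" "F W h x i \<le> outdeg W i + h i"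
    by (auto simp: F_def outdeg_def sum_negf)
qed

lemma F_const: "F W h (\<lambda>_. c) i = c * outdeg W i + h i"
proof -
  have "(\<Sum>j\<in>UNIV. W i j * c) = c * (\<Sum>j\<in>UNIV. W i j)"
    by (simp add: sum_distrib_left mult.commute)
  then show ?thesis by (simp add: F_def outdeg_def)
qed

lemma equilibria_iff:
  assumes "network W"
  shows "x \<in> equilibria W h \<longleftrightarrow> x \<in> configs \<and> (\<forall>i. x i * F W h x i \<ge> 0)"
proof -
  have u: "utility W h i (x(i := a)) = a * F W h x i" for i a
    using F_local[OF assms, of i "x(i:=a)" x h] by (simp add: utility_F)
  show ?thesis
  proof
    assume "x \<in> equilibria W h"
    then have c: "x \<in> configs" and e0: "\<forall>i. \<forall>a\<in>{-1,1}. a * F W h x i \<le> x i * F W h x i"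
      unfolding equilibria_def by (simp_all only: u mem_Collect_eq) (auto simp: utility_F)
    have e: "\<And>i a. a \<in> {-1,1} \<Longrightarrow> a * F W h x i \<le> x i * F W h x i" using e0 by blast
    have "x i * F W h x i \<ge> 0" for i
      using c e[of "- x i" i] unfolding configs_def by (cases "x i = 1") auto
    with c show "x \<in> configs \<and> (\<forall>i. x i * F W h x i \<ge> 0)" by blast
  next
    assume "x \<in> configs \<and> (\<forall>i. x i * F W h x i \<ge> 0)"
    then have c: "x \<in> configs" and nn: "\<And>i. x i * F W h x i \<ge> 0" by auto
    have "a * F W h x i \<le> x i * F W h x i" if "a \<in> {-1,1}" for a i
    proof -
      have "x i = 1 \<or> x i = -1" using c by (auto simp: configs_def)
      then show ?thesis using that nn[of i] by auto
    qed
    then show "x \<in> equilibria W h"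
      unfolding equilibria_def using c by (simp only: u mem_Collect_eq) (auto simp: utility_F)
  qed
qed

lemma F_split:
  assumes "x \<in> configs"
  shows "F W h x i = wS W {j. x j = 1} i - wS W (- {j. x j = 1}) i + h i"
proof -
  let ?P = "{j. x j = 1}"
  have "(\<Sum>j\<in>UNIV. W i j * x j) = (\<Sum>j\<in>?P. W i j * x j) + (\<Sum>j\<in>-?P. W i j * x j)"
    by (subst sum.union_disjoint[symmetric]) (auto intro!: sum.cong)
  also have "(\<Sum>j\<in>?P. W i j * x j) = wS W ?P i" by (simp add: wS_def)
  also have "(\<Sum>j\<in>-?P. W i j * x j) = - wS W (-?P) i"
    using assms by (auto simp: wS_def configs_def sum_negf[symmetric] intro!: sum.cong)
  finally show ?thesis by (simp add: F_def)
qed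

lemma indec_unhappy:
  assumes "h_indecomposable W h" "x \<in> configs" "x \<noteq> (\<lambda>_. 1)" "x \<noteq> (\<lambda>_. -1)"
  shows "\<exists>i. x i * F W h x i < 0"
proof -
  let ?P = "{j. x j = 1}"
  have "?P \<noteq> {}"
  proof
    assume "?P = {}"
    then have "x = (\<lambda>_. -1)" using assms(2) unfolding configs_def
      by (intro ext) (metis (mono_tags, lifting) empty_iff mem_Collect_eq)
    with assms show False by simp
  qed
  moreover have "- ?P \<noteq> {}"
  proof
    assume "- ?P = {}"
    then have "x = (\<lambda>_. 1)" by (intro ext) auto
    with assms show False by simp
  qed
  moreover have H: "?P \<noteq> {} \<and> - ?P \<noteq> {} \<longrightarrow> (\<exists>i\<in>?P. wS W ?P i + h i < wS W (- ?P) i) \<or>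
        (\<exists>i\<in>- ?P. wS W (- ?P) i - h i < wS W ?P i)"
    using assms(1) unfolding h_indecomposable_def by (rule spec)
  ultimately have "(\<exists>i\<in>?P. wS W ?P i + h i < wS W (- ?P) i) \<or>
        (\<exists>i\<in>- ?P. wS W (- ?P) i - h i < wS W ?P i)"
    by (meson conjI mp)
  then show ?thesis
  proof
    assume "\<exists>i\<in>?P. wS W ?P i + h i < wS W (- ?P) i"
    then obtain i where "x i = 1" "wS W ?P i + h i < wS W (- ?P) i" by auto
    moreover have "F W h x i < 0" using F_split[OF assms(2), of W h i] calculation(2) by linarith
    ultimately show ?thesis by (intro exI[of _ i]) simp
  next
    assume "\<exists>i\<in>-?P. wS W (- ?P) i - h i < wS W ?P i"
    then obtain i where "x i \<noteq> 1" "wS W (- ?P) i - h i < wS W ?P i" by auto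
    moreover then have "x i = -1" using assms(2) by (auto simp: configs_def)
    moreover have "F W h x i > 0" using F_split[OF assms(2), of W h i] calculation(2) by linarith
    ultimately show ?thesis by (intro exI[of _ i]) simp
  qed
qed


lemma alpha_path_single: "x \<in> configs \<Longrightarrow> alpha_path \<alpha> W h [x]"
  by (simp add: alpha_path_def)

lemma alpha_path_Cons2:
  "alpha_path \<alpha> W h (x # y # r) \<longleftrightarrow> x \<in> configs \<and>
     (\<exists>i. adm_step x y i \<and> improves \<alpha> W h i x y) \<and> alpha_path \<alpha> W h (y # r)"
proof
  assume a: "alpha_path \<alpha> W h (x # y # r)"
  have "\<forall>k. Suc k < length (y # r) \<longrightarrow>
        (\<exists>i. adm_step ((y#r) ! k) ((y#r) ! Suc k) i \<and> improves \<alpha> W h i ((y#r) ! k) ((y#r) ! Suc k))"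
  proof (intro allI impI)
    fix k assume "Suc k < length (y # r)"
    then have "Suc (Suc k) < length (x # y # r)" by simp
    with a show "\<exists>i. adm_step ((y#r) ! k) ((y#r) ! Suc k) i \<and> improves \<alpha> W h i ((y#r) ! k) ((y#r) ! Suc k)"
      unfolding alpha_path_def by (metis nth_Cons_Suc)
  qed
  moreover have "\<exists>i. adm_step x y i \<and> improves \<alpha> W h i x y"
    using a unfolding alpha_path_def by (metis Suc_less_eq length_Cons nth_Cons_0 nth_Cons_Suc zero_less_Suc)
  ultimately show "x \<in> configs \<and> (\<exists>i. adm_step x y i \<and> improves \<alpha> W h i x y) \<and> alpha_path \<alpha> W h (y # r)"
    using a unfolding alpha_path_def by auto
next
  assume a: "x \<in> configs \<and> (\<exists>i. adm_step x y i \<and> improves \<alpha> W h i x y) \<and> alpha_path \<alpha> W h (y # r)"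
  show "alpha_path \<alpha> W h (x # y # r)"
    unfolding alpha_path_def
  proof (intro conjI allI impI)
    fix k assume k: "Suc k < length (x # y # r)"
    show "\<exists>i. adm_step ((x # y # r) ! k) ((x # y # r) ! Suc k) i \<and>
             improves \<alpha> W h i ((x # y # r) ! k) ((x # y # r) ! Suc k)"
    proof (cases k)
      case 0 then show ?thesis using a by simp
    next
      case (Suc k') then show ?thesis using a k unfolding alpha_path_def by simp
    qed
  qed (use a in \<open>auto simp: alpha_path_def\<close>)
qed

lemma reaches_refl: "x \<in> configs \<Longrightarrow> reaches \<alpha> W h x x"
  unfolding reaches_def by (intro exI[of _ "[x]"]) (simp add: alpha_path_def)

lemma reaches_Cons:
  assumes "x \<in> configs" "adm_step x y i" "improves \<alpha> W h i x y" "reaches \<alpha> W h y z"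
  shows "reaches \<alpha> W h x z"
proof -
  obtain p where p: "alpha_path \<alpha> W h p" "hd p = y" "last p = z"
    using assms(4) unfolding reaches_def by blast
  then obtain r where r: "p = y # r" by (cases p) (auto simp: alpha_path_def)
  have "alpha_path \<alpha> W h (x # p)" using p r assms by (simp add: alpha_path_Cons2) blast
  then show ?thesis unfolding reaches_def using p r by (intro exI[of _ "x # p"]) simp
qed

lemma reaches_trans:
  assumes "reaches \<alpha> W h x y" "reaches \<alpha> W h y z"
  shows "reaches \<alpha> W h x z"
proof -
  obtain p where p: "alpha_path \<alpha> W h p" "hd p = x" "last p = y"
    using assms(1) unfolding reaches_def by blast
  have "\<And>x. alpha_path \<alpha> W h p \<Longrightarrow> hd p = x \<Longrightarrow> last p = y \<Longrightarrow> reaches \<alpha> W h x z"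
  proof (induction p)
    case Nil then show ?case by (simp add: alpha_path_def)
  next
    case (Cons a p)
    show ?case
    proof (cases p)
      case Nil then show ?thesis using Cons assms(2) by simp
    next
      case (Cons b r)
      from Cons.prems have a: "alpha_path \<alpha> W h (a # b # r)" using Cons by simp
      then obtain i where "adm_step a b i" "improves \<alpha> W h i a b" "a \<in> configs"
        "alpha_path \<alpha> W h (b # r)" by (auto simp: alpha_path_Cons2)
      moreover have "reaches \<alpha> W h b z" using Cons.IH[of b] Cons.prems \<open>alpha_path \<alpha> W h (b # r)\<close> Cons by simp
      ultimately show ?thesis using Cons.prems reaches_Cons by fastforce
    qed
  qed
  then show ?thesis using p by blast
qed

lemma alpha_path_Imp_BR:
  assumes "alpha_path Imp W h p" shows "alpha_path BR W h p"
proof -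
  have "p \<noteq> [] \<and> set p \<subseteq> configs \<and> (\<forall>k. Suc k < length p \<longrightarrow> (\<exists>i. adm_step (p!k) (p!Suc k) i
     \<and> utility W h i (p!k) < utility W h i (p!Suc k)))"
    using assms by (simp add: alpha_path_def improves_def)
  then show ?thesis unfolding alpha_path_def improves_def dynamics.case
    by (meson less_imp_le)
qed

lemma reaches_Imp_BR: "reaches Imp W h x y \<Longrightarrow> reaches BR W h x y"
  unfolding reaches_def using alpha_path_Imp_BR by blast

lemma step_reaches:
  assumes "network W" "x \<in> configs" "x i * F W h x i < 0"
  shows "reaches Imp W h x (x(i := - x i))"
proof -
  let ?y = "x(i := - x i)"
  have xi: "x i = 1 \<or> x i = -1" using assms(2) by (auto simp: configs_def)
  have yc: "?y \<in> configs" using assms(2) xi by (auto simp: configs_def)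
  have "adm_step x ?y i" using assms(2) yc xi by (auto simp: adm_step_def)
  moreover have "F W h ?y i = F W h x i" using F_local[OF assms(1)] by simp
  then have "improves Imp W h i x ?y" using assms(3) by (simp add: improves_def utility_F)
  ultimately show ?thesis using reaches_Cons[OF assms(2)] reaches_refl[OF yc] by blast
qed

lemma no_escape:
  assumes "\<forall>y i. adm_step c y i \<longrightarrow> \<not> improves \<alpha> W h i c y" "reaches \<alpha> W h c z"
  shows "z = c"
proof -
  obtain p where p: "alpha_path \<alpha> W h p" "hd p = c" "last p = z"
    using assms(2) unfolding reaches_def by blast
  show ?thesis
  proof (cases p)
    case Nil then show ?thesis using p by (simp add: alpha_path_def)
  next
    case (Cons a r)
    show ?thesis
    proof (cases r)
      case Nil then show ?thesis using p Cons by simp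
    next
      case (Cons b r')
      then show ?thesis using p \<open>p = a # r\<close> assms(1) by (auto simp: alpha_path_Cons2)
    qed
  qed
qed


lemma down_phase:
  assumes "network W" "x \<in> configs"
  shows "\<exists>y\<in>configs. reaches Imp W h x y \<and> (\<forall>i. y i \<le> x i) \<and> (\<forall>i. y i = 1 \<longrightarrow> F W h y i \<ge> 0)
           \<and> (\<forall>i. x i = 1 \<and> y i = -1 \<longrightarrow> F W h y i < 0)"
proof -
  have "\<And>x. card {i. x i = 1} = n \<Longrightarrow> x \<in> configs \<Longrightarrow>
    \<exists>y\<in>configs. reaches Imp W h x y \<and> (\<forall>i. y i \<le> x i) \<and> (\<forall>i. y i = 1 \<longrightarrow> F W h y i \<ge> 0)
           \<and> (\<forall>i. x i = 1 \<and> y i = -1 \<longrightarrow> F W h y i < 0)" for n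
  proof (induction n rule: less_induct)
    case (less n x)
    show ?case
    proof (cases "\<forall>i. x i = 1 \<longrightarrow> F W h x i \<ge> 0")
      case True
      moreover note reaches_refl[OF less.prems(2), of Imp W h]
      ultimately show ?thesis using less.prems(2) by (intro bexI[of _ x]) auto
    next
      case False
      then obtain i where i: "x i = 1" "F W h x i < 0" by auto
      let ?x' = "x(i := -1)"
      have c': "?x' \<in> configs" using less.prems by (auto simp: configs_def)
      have "{j. ?x' j = 1} = {j. x j = 1} - {i}" by auto
      then have "card {j. ?x' j = 1} < n" using less.prems(1) i card_Diff1_less[of "{j. x j = 1}" i]
        by simp
      from less.IH[OF this refl c'] obtain y where y: "y \<in> configs" "reaches Imp W h ?x' y"
        "\<forall>j. y j \<le> ?x' j" "\<forall>j. y j = 1 \<longrightarrow> F W h y j \<ge> 0"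
        "\<forall>j. ?x' j = 1 \<and> y j = -1 \<longrightarrow> F W h y j < 0" by blast
      have s1: "reaches Imp W h x (x(i := - x i))" using step_reaches[OF assms(1) less.prems(2), where i=i and h=h] i by simp
      have r: "reaches Imp W h x y" using reaches_trans[OF s1] y(2) i by simp
      have "?x' j \<le> x j" for j using i by auto
      then have le: "\<forall>j. y j \<le> x j" using y(3) order.trans by blast
      have "F W h y i \<le> F W h ?x' i" using F_mono[OF assms(1)] y(3) by blast
      also have "F W h ?x' i = F W h x i" using F_local[OF assms(1)] by simp
      finally have "F W h y i < 0" using i by simp
      then have "\<forall>j. x j = 1 \<and> y j = -1 \<longrightarrow> F W h y j < 0" using y(5) by auto
      then show ?thesis using y r le by blast
    qed
  qed
  then show ?thesis using assms by blast
qed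

lemma up_phase:
  assumes "network W" "x \<in> configs"
  shows "\<exists>y\<in>configs. reaches Imp W h x y \<and> (\<forall>i. x i \<le> y i) \<and> (\<forall>i. y i = -1 \<longrightarrow> F W h y i \<le> 0)
           \<and> (\<forall>i. x i = -1 \<and> y i = 1 \<longrightarrow> F W h y i > 0)"
proof -
  have "\<And>x. card {i. x i = -1} = n \<Longrightarrow> x \<in> configs \<Longrightarrow>
    \<exists>y\<in>configs. reaches Imp W h x y \<and> (\<forall>i. x i \<le> y i) \<and> (\<forall>i. y i = -1 \<longrightarrow> F W h y i \<le> 0)
           \<and> (\<forall>i. x i = -1 \<and> y i = 1 \<longrightarrow> F W h y i > 0)" for n
  proof (induction n rule: less_induct)
    case (less n x)
    show ?case
    proof (cases "\<forall>i. x i = -1 \<longrightarrow> F W h x i \<le> 0")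
      case True
      moreover note reaches_refl[OF less.prems(2), of Imp W h]
      ultimately show ?thesis using less.prems(2) by (intro bexI[of _ x]) auto
    next
      case False
      then obtain i where i: "x i = -1" "F W h x i > 0" by auto
      let ?x' = "x(i := 1)"
      have c': "?x' \<in> configs" using less.prems by (auto simp: configs_def)
      have "{j. ?x' j = -1} = {j. x j = -1} - {i}" by auto
      then have "card {j. ?x' j = -1} < n" using less.prems(1) i card_Diff1_less[of "{j. x j = -1}" i]
        by simp
      from less.IH[OF this refl c'] obtain y where y: "y \<in> configs" "reaches Imp W h ?x' y"
        "\<forall>j. ?x' j \<le> y j" "\<forall>j. y j = -1 \<longrightarrow> F W h y j \<le> 0"
        "\<forall>j. ?x' j = -1 \<and> y j = 1 \<longrightarrow> F W h y j > 0" by blast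
      have s1: "reaches Imp W h x (x(i := - x i))" using step_reaches[OF assms(1) less.prems(2), where i=i and h=h] i by simp
      have r: "reaches Imp W h x y" using reaches_trans[OF s1] y(2) i by simp
      have "x j \<le> ?x' j" for j using i by auto
      then have le: "\<forall>j. x j \<le> y j" using y(3) order.trans by blast
      have "F W h ?x' i \<le> F W h y i" using F_mono[OF assms(1)] y(3) by blast
      moreover have "F W h ?x' i = F W h x i" using F_local[OF assms(1)] by simp
      ultimately have "F W h y i > 0" using i by simp
      then have "\<forall>j. x j = -1 \<and> y j = 1 \<longrightarrow> F W h y j > 0" using y(5) by auto
      then show ?thesis using y r le by blast
    qed
  qed
  then show ?thesis using assms by blast
qed

lemma reach_equilibrium:
  assumes "network W" "x \<in> configs"
  shows "\<exists>z. z \<in> equilibria W h \<and> reaches Imp W h x z"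
proof -
  obtain y where y: "y \<in> configs" "reaches Imp W h x y" "\<forall>i. y i = 1 \<longrightarrow> F W h y i \<ge> 0"
    using down_phase[OF assms, of h] by blast
  obtain z where z: "z \<in> configs" "reaches Imp W h y z" "\<forall>i. y i \<le> z i" "\<forall>i. z i = -1 \<longrightarrow> F W h z i \<le> 0"
    "\<forall>i. y i = -1 \<and> z i = 1 \<longrightarrow> F W h z i > 0"
    using up_phase[OF assms(1) y(1), of h] by blast
  have "z i * F W h z i \<ge> 0" for i
  proof -
    have zi: "z i = 1 \<or> z i = -1" "y i = 1 \<or> y i = -1" using z(1) y(1) by (auto simp: configs_def)
    have "F W h y i \<le> F W h z i" using F_mono[OF assms(1)] z(3) by blast
    then show ?thesis using zi z(4,5) y(3) by (cases "z i = 1"; cases "y i = 1") auto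
  qed
  then show ?thesis using z(1) reaches_trans[OF y(2) z(2)] equilibria_iff[OF assms(1)] by blast
qed


lemma outdeg_nonneg: "network W \<Longrightarrow> outdeg W i \<ge> 0"
  unfolding outdeg_def network_def by (simp add: sum_nonneg)

lemma const_configs: "c \<in> {-1, 1} \<Longrightarrow> (\<lambda>_. c) \<in> configs"
  by (auto simp: configs_def)

lemma eq_sub:
  assumes "network W" "h_indecomposable W h" "x \<in> equilibria W h"
  shows "x = (\<lambda>_. 1) \<or> x = (\<lambda>_. -1)"
  using indec_unhappy[OF assms(2)] assms(3) equilibria_iff[OF assms(1)]
  by (meson not_le)

lemma adm_step_util:
  assumes "network W" "adm_step c y i"
  shows "utility W h i y = - (c i * F W h c i)"
proof -
  have "c i = 1 \<or> c i = -1" "y i = 1 \<or> y i = -1" "y i \<noteq> c i"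
    using assms(2) unfolding adm_step_def configs_def by auto
  then have "y i = - c i" by auto
  moreover have "F W h y i = F W h c i" using F_local[OF assms(1)] assms(2) unfolding adm_step_def by blast
  ultimately show ?thesis by (simp add: utility_F)
qed

lemma no_improve_Imp:
  assumes "network W" "\<forall>i. c i * F W h c i \<ge> 0"
  shows "\<forall>y i. adm_step c y i \<longrightarrow> \<not> improves Imp W h i c y"
  using assms adm_step_util[OF assms(1)] by (auto simp: improves_def utility_F)
   (metis neg_le_0_iff_le order.strict_trans2 not_le order.trans)

lemma no_improve_BR:
  assumes "network W" "\<forall>i. c i * F W h c i > 0"
  shows "\<forall>y i. adm_step c y i \<longrightarrow> \<not> improves BR W h i c y"
  using assms adm_step_util[OF assms(1)] by (auto simp: improves_def utility_F)
   (metis neg_less_0_iff_less not_le order.strict_trans1)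

lemma stable_from:
  assumes "network W" "h_indecomposable W h"
    and Ysub: "Y \<subseteq> {(\<lambda>_. 1), (\<lambda>_. -1)}"
    and eqY: "equilibria W h \<subseteq> Y"
    and noesc: "\<forall>c\<in>Y. \<forall>y i. adm_step c y i \<longrightarrow> \<not> improves \<alpha> W h i c y"
    and mono: "\<forall>x y. reaches Imp W h x y \<longrightarrow> reaches \<alpha> W h x y"
  shows "globally_stable \<alpha> W h Y"
  unfolding globally_stable_def
proof (intro conjI ballI allI impI)
  fix x :: "'a \<Rightarrow> real" assume "x \<in> configs"
  then obtain z where "z \<in> equilibria W h" "reaches Imp W h x z"
    using reach_equilibrium[OF assms(1)] by blast
  then show "\<exists>y\<in>Y. reaches \<alpha> W h x y" using eqY mono by blast
next
  fix y z assume "y \<in> Y" "z \<notin> Y"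
  then show "\<not> reaches \<alpha> W h y z" using no_escape[of y \<alpha> W h z] noesc by auto
qed


lemma case_iii_pos:
  assumes net: "network W" and ind: "h_indecomposable W h"
    and a: "a \<in> {-1, 1::real}" and i0: "outdeg W i0 < a * h i0"
  shows "a * F W h (\<lambda>_. a) j > 0"
proof (rule ccontr)
  assume neg: "\<not> a * F W h (\<lambda>_. a) j > 0"
  have w0: "outdeg W k \<ge> 0" for k using outdeg_nonneg[OF net] .
  from a show False
  proof
    assume a1: "a = -1"
    then have hj: "- outdeg W j + h j \<ge> 0" using neg F_const[of W h "-1" j] by simp
    have hi0: "outdeg W i0 + h i0 < 0" using i0 a1 by simp
    have ne: "i0 \<noteq> j" using hj hi0 w0[of j] by auto
    let ?x = "(\<lambda>_. -1::real)(j := 1)"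
    have xc: "?x \<in> configs" by (auto simp: configs_def)
    obtain y where y: "y \<in> configs" "\<forall>i. ?x i \<le> y i" "\<forall>i. y i = -1 \<longrightarrow> F W h y i \<le> 0"
      "\<forall>i. ?x i = -1 \<and> y i = 1 \<longrightarrow> F W h y i > 0"
      using up_phase[OF net xc, of h] by blast
    have ycase: "y k = 1 \<or> y k = -1" for k using y(1) by (auto simp: configs_def)
    have "?x j \<le> y j" using y(2) by blast
    then have "1 \<le> y j" by simp
    then have yj: "y j = 1" using ycase[of j] by auto
    have yi0: "y i0 = -1"
    proof (rule ccontr)
      assume "y i0 \<noteq> -1"
      then have "y i0 = 1" using ycase by blast
      then have "F W h y i0 > 0" using y(4) ne by auto
      moreover have "F W h y i0 \<le> outdeg W i0 + h i0" using F_bounds[OF net y(1)] by blast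
      ultimately show False using hi0 by simp
    qed
    have "y k * F W h y k \<ge> 0" for k
    proof (cases "y k = -1")
      case True then show ?thesis using y(3) by simp
    next
      case False
      then have yk: "y k = 1" using ycase by blast
      show ?thesis
      proof (cases "k = j")
        case True then show ?thesis using F_bounds[OF net y(1), where i=j and h=h] hj yk by simp
      next
        case False then show ?thesis using y(4) yk by (simp add: less_imp_le)
      qed
    qed
    then have "y \<in> equilibria W h" using equilibria_iff[OF net] y(1) by blast
    then have "y = (\<lambda>_. 1) \<or> y = (\<lambda>_. -1)" using eq_sub[OF net ind] by blast
    then show False
    proof (elim disjE)
      assume "y = (\<lambda>_. 1)" then show False using yi0 by simp
    next
      assume "y = (\<lambda>_. -1)" then show False using yj by simp
    qed
  next
    assume "a \<in> {1}"
    then have a1: "a = 1" by simp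
    then have hj: "outdeg W j + h j \<le> 0" using neg F_const[of W h 1 j] by simp
    have hi0: "- outdeg W i0 + h i0 > 0" using i0 a1 by simp
    have ne: "i0 \<noteq> j" using hj hi0 w0[of j] by auto
    let ?x = "(\<lambda>_. 1::real)(j := -1)"
    have xc: "?x \<in> configs" by (auto simp: configs_def)
    obtain y where y: "y \<in> configs" "\<forall>i. y i \<le> ?x i" "\<forall>i. y i = 1 \<longrightarrow> F W h y i \<ge> 0"
      "\<forall>i. ?x i = 1 \<and> y i = -1 \<longrightarrow> F W h y i < 0"
      using down_phase[OF net xc, of h] by blast
    have ycase: "y k = 1 \<or> y k = -1" for k using y(1) by (auto simp: configs_def)
    have "y j \<le> ?x j" using y(2) by blast
    then have "y j \<le> -1" by simp
    then have yj: "y j = -1" using ycase[of j] by auto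
    have yi0: "y i0 = 1"
    proof (rule ccontr)
      assume "y i0 \<noteq> 1"
      then have "y i0 = -1" using ycase by blast
      then have "F W h y i0 < 0" using y(4) ne by auto
      moreover have "- outdeg W i0 + h i0 \<le> F W h y i0" using F_bounds[OF net y(1)] by blast
      ultimately show False using hi0 by simp
    qed
    have "y k * F W h y k \<ge> 0" for k
    proof (cases "y k = 1")
      case True then show ?thesis using y(3) by simp
    next
      case False
      then have yk: "y k = -1" using ycase by blast
      show ?thesis
      proof (cases "k = j")
        case True then show ?thesis using F_bounds[OF net y(1), where i=j and h=h] hj yk by simp
      next
        case False then show ?thesis using y(4) yk by (simp add: less_imp_le)
      qed
    qed
    then have "y \<in> equilibria W h" using equilibria_iff[OF net] y(1) by blast
    then have "y = (\<lambda>_. 1) \<or> y = (\<lambda>_. -1)" using eq_sub[OF net ind] by blast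
    then show False
    proof (elim disjE)
      assume "y = (\<lambda>_. 1)" then show False using yj by simp
    next
      assume "y = (\<lambda>_. -1)" then show False using yi0 by simp
    qed
  qed
qed


theorem corollary1:
  fixes W :: "'v::finite \<Rightarrow> 'v \<Rightarrow> real" and h :: "'v \<Rightarrow> real"
  assumes "network W" and "h_indecomposable W h"
  shows "((\<forall>i. \<bar>h i\<bar> \<le> outdeg W i) \<longrightarrow>
            equilibria W h = {(\<lambda>_. 1), (\<lambda>_. -1)} \<and>
            globally_stable Imp W h {(\<lambda>_. 1), (\<lambda>_. -1)})
       \<and> ((\<forall>i. \<bar>h i\<bar> < outdeg W i) \<longrightarrow>
            equilibria W h = {(\<lambda>_. 1), (\<lambda>_. -1)} \<and>
            globally_stable BR W h {(\<lambda>_. 1), (\<lambda>_. -1)})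
       \<and> (\<forall>a::real. a \<in> {-1, 1} \<longrightarrow> (\<exists>i. outdeg W i < a * h i) \<longrightarrow>
            equilibria W h = {(\<lambda>_. a)} \<and>
            globally_stable BR W h {(\<lambda>_. a)})"
proof (intro conjI impI allI)
  note net = assms(1) and ind = assms(2)
  have sub: "equilibria W h \<subseteq> {(\<lambda>_. 1), (\<lambda>_. -1)}" using eq_sub[OF net ind] by blast
  have F1: "F W h (\<lambda>_. 1) i = outdeg W i + h i" for i using F_const[of W h 1 i] by simp
  have c1: "(\<lambda>_. 1::real) \<in> configs" and cm: "(\<lambda>_. -1::real) \<in> configs" by (simp_all add: configs_def)
  have Fm: "F W h (\<lambda>_. -1) i = - outdeg W i + h i" for i using F_const[of W h "-1" i] by simp
  {
    assume hw: "\<forall>i. \<bar>h i\<bar> \<le> outdeg W i"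
    have "0 \<le> F W h (\<lambda>_. 1) i" "F W h (\<lambda>_. -1) i \<le> 0" for i
      using hw[rule_format, of i] F1[of i] Fm[of i] by (simp_all add: abs_le_iff)
    then have n1: "\<forall>i. (\<lambda>_. 1::real) i * F W h (\<lambda>_. 1) i \<ge> 0"
      and n2: "\<forall>i. (\<lambda>_. -1::real) i * F W h (\<lambda>_. -1) i \<ge> 0" by simp_all
    have e: "equilibria W h = {(\<lambda>_. 1), (\<lambda>_. -1)}"
      using sub n1 n2 equilibria_iff[OF net] c1 cm by auto
    show "equilibria W h = {(\<lambda>_. 1), (\<lambda>_. -1)}" by (rule e)
    show "globally_stable Imp W h {(\<lambda>_. 1), (\<lambda>_. -1)}"
      by (rule stable_from[OF net ind]) (use e no_improve_Imp[OF net] n1 n2 in auto)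
  }
  {
    assume hw: "\<forall>i. \<bar>h i\<bar> < outdeg W i"
    have "0 < F W h (\<lambda>_. 1) i" "F W h (\<lambda>_. -1) i < 0" for i
      using hw[rule_format, of i] F1[of i] Fm[of i] by (simp_all add: abs_less_iff)
    then have n1: "\<forall>i. (\<lambda>_. 1::real) i * F W h (\<lambda>_. 1) i > 0"
      and n2: "\<forall>i. (\<lambda>_. -1::real) i * F W h (\<lambda>_. -1) i > 0" by simp_all
    have e: "equilibria W h = {(\<lambda>_. 1), (\<lambda>_. -1)}"
      using sub n1 n2 equilibria_iff[OF net] c1 cm by (auto simp: less_imp_le)
    show "equilibria W h = {(\<lambda>_. 1), (\<lambda>_. -1)}" by (rule e)
    show "globally_stable BR W h {(\<lambda>_. 1), (\<lambda>_. -1)}"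
      by (rule stable_from[OF net ind]) (use e no_improve_BR[OF net] n1 n2 reaches_Imp_BR in auto)
  }
  {
    fix a :: real
    assume a: "a \<in> {-1, 1}" and ex: "\<exists>i. outdeg W i < a * h i"
    then obtain i0 where i0: "outdeg W i0 < a * h i0" by blast
    have pos: "\<forall>j. (\<lambda>_. a) j * F W h (\<lambda>_. a) j > 0"
      using case_iii_pos[OF net ind a i0] by simp
    have ain: "(\<lambda>_. a) \<in> equilibria W h"
      using pos equilibria_iff[OF net] const_configs[OF a] by (auto simp: less_imp_le)
    have notother: "(\<lambda>_. -a) \<notin> equilibria W h"
    proof
      assume "(\<lambda>_. -a) \<in> equilibria W h"
      then have "\<forall>i. (-a) * F W h (\<lambda>_. -a) i \<ge> 0" by (simp add: equilibria_iff[OF net])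
      then have "(-a) * F W h (\<lambda>_. -a) i0 \<ge> 0" by simp
      moreover have "(-a) * F W h (\<lambda>_. -a) i0 = outdeg W i0 - a * h i0"
        using a F_const[of W h "-a" i0] by (auto simp: algebra_simps)
      ultimately show False using i0 by simp
    qed
    have e: "equilibria W h = {(\<lambda>_. a)}"
    proof
      show "equilibria W h \<subseteq> {(\<lambda>_. a)}"
      proof
        fix x assume x: "x \<in> equilibria W h"
        then have "x = (\<lambda>_. 1) \<or> x = (\<lambda>_. -1)" using sub by blast
        then show "x \<in> {(\<lambda>_. a)}" using a x notother by auto
      qed
    qed (use ain in auto)
    show "equilibria W h = {(\<lambda>_. a)}" by (rule e)
    show "globally_stable BR W h {(\<lambda>_. a)}"
      by (rule stable_from[OF net ind]) (use e no_improve_BR[OF net] pos a reaches_Imp_BR in auto)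
  }
qed

end
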